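(* Let $n\ge 1$, let $n_0>0$ and $N_+\in\mathbb{R}^n$ with positive entries, let $M_1\in\mathbb{R}$, and let $L_R\in\mathbb{R}^n$ have finite entries. For $A\in\mathbb{R}^n$ set $a_0(A)=M_1-\mathbf{1}^\top A$ and $$H(A)=A^\top\big(-L_R-\log(N_+)+\mathbf{1}\log(n_0)\big)+\sum_{i=1}^n\big(A_i\log A_i-A_i\big)+a_0(A)\log(a_0(A))-a_0(A),$$ with $\log(N_+)$ taken componentwise and the convention $0\log 0=0$, defined on $\{A\in\mathbb{R}^n: A\ge 0,\ a_0(A)\ge 0\}$. Suppose that some $A\in\mathbb{R}^n$ with $A\ge 0$ satisfies $M_1>\mathbf{1}^\top A$. Then $H$ has a unique minimizer over $A\in\mathbb{R}^n_+$ (within its domain).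
   Context: This is the Greenland–Longnecker pseudo-count problem for log relative risks: $n$ alternative exposure levels, $n_0$ total subjects at the reference exposure, $N_+$ total subjects at the alternative exposures, $M_1$ total cases, $L_R$ reported log relative risks; $A$ are pseudo-cases at alternative exposures and $a_0$ pseudo-cases at the reference exposure. The gradient of $H$ is $-L_R+\log(A)-\log(N_+)-\log(a_0(A))\mathbf{1}+\log(n_0)\mathbf{1}$. $\mathbf{1}$ denotes the all-ones vector. *)

theory Defs
  imports "HOL-Analysis.Analysis"
begin

definition xlogx :: "real \<Rightarrow> real" where
  "xlogx t = (if t = 0 then 0 else t * ln t)"

definition a0 :: "real \<Rightarrow> real ^ 'n \<Rightarrow> real" where
  "a0 M1 A = M1 - (\<Sum>i\<in>UNIV. A $ i)"

definition GL_H :: "real \<Rightarrow> real ^ 'n \<Rightarrow> real \<Rightarrow> real ^ 'n \<Rightarrow> real ^ 'n \<Rightarrow> real" where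
  "GL_H n0 Nplus M1 LR A =
     (\<Sum>i\<in>UNIV. A $ i * (- LR $ i - ln (Nplus $ i) + ln n0))
     + (\<Sum>i\<in>UNIV. xlogx (A $ i) - A $ i)
     + xlogx (a0 M1 A) - a0 M1 A"

definition GL_dom :: "real \<Rightarrow> (real ^ 'n) set" where
  "GL_dom M1 = {A. (\<forall>i. 0 \<le> A $ i) \<and> 0 \<le> a0 M1 A}"

end

theory Submission imports Defs begin

lemma xlogx_eq: "xlogx t = t * ln t" by (simp add: xlogx_def)

lemma xlogx_mid_strict:
  fixes x y :: real assumes "0 \<le> x" "0 \<le> y" "x \<noteq> y"
  shows "2 * xlogx ((x+y)/2) < xlogx x + xlogx y"
proof -
  define m where "m = (x+y)/2"
  have m: "m > 0" using assms unfolding m_def by auto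
  have key: "t * ln t \<ge> t * ln m + (t - m)" if t: "0 \<le> t" for t
  proof (cases "t = 0")
    case True then show ?thesis using m by simp
  next
    case False
    then have tp: "t > 0" using t by simp
    have "ln m - ln t \<le> (m - t)/t" using ln_diff_le[OF m tp] .
    then have "t * (ln m - ln t) \<le> m - t" using tp by (simp add: field_simps)
    then show ?thesis by (simp add: algebra_simps)
  qed
  have skey: "t * ln t > t * ln m + (t - m)" if t: "0 \<le> t" "t \<noteq> m" for t
  proof (cases "t = 0")
    case True then show ?thesis using m by simp
  next
    case False
    then have tp: "t > 0" using t by simp
    have "ln m - ln t < (m - t)/t" using ln_diff_less[OF m tp] t by auto
    then have "t * (ln m - ln t) < m - t" using tp by (simp add: field_simps)
    then show ?thesis by (simp add: algebra_simps)
  qed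
  have "x \<noteq> m" using assms unfolding m_def by auto
  then have "x * ln x + y * ln y > x * ln m + (x - m) + (y * ln m + (y - m))"
    using skey[of x] key[of y] assms by linarith
  also have "x * ln m + (x - m) + (y * ln m + (y - m)) = 2 * (m * ln m)"
    unfolding m_def by (simp add: algebra_simps)
  finally show ?thesis unfolding xlogx_eq m_def by simp
qed

lemma xlogx_mid:
  fixes x y :: real assumes "0 \<le> x" "0 \<le> y"
  shows "2 * xlogx ((x+y)/2) \<le> xlogx x + xlogx y"
  using xlogx_mid_strict[OF assms] by (cases "x = y") auto

lemma xlogx_cont: "continuous_on {0..} xlogx"
proof -
  have l1: "((\<lambda>x::real. - (ln x / x)) \<longlongrightarrow> 0) at_top"
    using tendsto_minus[OF ln_x_over_x_tendsto_0] by simp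
  have "eventually (\<lambda>x::real. - (ln x / x) = inverse x * ln (inverse x)) at_top"
    using eventually_gt_at_top[of 0] by eventually_elim (simp add: ln_inverse divide_inverse)
  then have "((\<lambda>x::real. inverse x * ln (inverse x)) \<longlongrightarrow> 0) at_top"
    using l1 tendsto_cong by fastforce
  then have lim: "((\<lambda>t::real. t * ln t) \<longlongrightarrow> 0) (at_right 0)"
    unfolding filterlim_at_right_to_top by simp
  show ?thesis unfolding continuous_on_eq_continuous_within
  proof
    fix t :: real assume "t \<in> {0..}"
    show "continuous (at t within {0..}) xlogx"
    proof (cases "t = 0")
      case True
      have "at (0::real) within {0..} = at_right 0"
        by (simp add: at_within_Ici_at_right)
      then show ?thesis using True lim unfolding continuous_within xlogx_eq by simp
    next
      case False
      then have "t > 0" using \<open>t \<in> {0..}\<close> by simp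
      then have "isCont xlogx t" unfolding xlogx_eq[abs_def] by (intro continuous_intros) auto
      then show ?thesis using continuous_at_imp_continuous_at_within by blast
    qed
  qed
qed


lemma a0_mid: "a0 M1 ((1/2) *\<^sub>R (A + B)) = (a0 M1 A + a0 M1 B)/2"
  unfolding a0_def by (simp add: sum.distrib sum_divide_distrib[symmetric] field_simps)

theorem theorem2:
  fixes n0 M1 :: real and Nplus LR :: "real ^ 'n"
  assumes "n0 > 0"
    and "\<forall>i. Nplus $ i > 0"
    and "\<exists>A :: real ^ 'n. (\<forall>i. 0 \<le> A $ i) \<and> M1 > (\<Sum>i\<in>UNIV. A $ i)"
  shows "\<exists>!A. A \<in> GL_dom M1 \<and> (\<forall>B \<in> GL_dom M1. GL_H n0 Nplus M1 LR A \<le> GL_H n0 Nplus M1 LR B)"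
proof -
  define D where "D = (GL_dom M1 :: (real^'n) set)"
  define H where "H = GL_H n0 Nplus M1 LR"
  define c where "c = (\<lambda>i. - LR $ i - ln (Nplus $ i) + ln n0)"
  have Hdef: "H A = (\<Sum>i\<in>UNIV. A $ i * c i) + (\<Sum>i\<in>UNIV. xlogx (A $ i) - A $ i)
     + xlogx (a0 M1 A) - a0 M1 A" for A
    unfolding H_def GL_H_def c_def by simp
  obtain A0 :: "real^'n" where A0: "\<forall>i. 0 \<le> A0 $ i" "M1 > (\<Sum>i\<in>UNIV. A0 $ i)" using assms(3) by blast
  have "0 \<le> (\<Sum>i\<in>UNIV. A0 $ i)" using A0(1) by (simp add: sum_nonneg)
  then have M1: "M1 > 0" using A0(2) by linarith
  have "0 \<in> D" unfolding D_def GL_dom_def a0_def using M1 by simp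
  then have ne: "D \<noteq> {}" by blast
  have cl: "closed D" unfolding D_def GL_dom_def a0_def
    by (intro closed_Collect_all closed_Collect_le closed_Collect_conj continuous_intros)
  have "D \<subseteq> cbox 0 (\<chi> i. M1)"
  proof
    fix A :: "real^'n" assume "A \<in> D"
    then have nn: "\<forall>i. 0 \<le> A $ i" and s: "(\<Sum>i\<in>UNIV. A $ i) \<le> M1"
      unfolding D_def GL_dom_def a0_def by auto
    have "A $ i \<le> M1" for i
      using member_le_sum[of i UNIV "\<lambda>i. A $ i"] nn s by auto
    then show "A \<in> cbox 0 (\<chi> i. M1)" using nn by (simp add: mem_box_cart)
  qed
  then have bd: "bounded D" using bounded_cbox bounded_subset by blast
  have cpt: "compact D" using cl bd by (simp add: compact_eq_bounded_closed)
  have ca0: "continuous_on D (\<lambda>A. a0 M1 A)" unfolding a0_def by (intro continuous_intros)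
  have c1: "continuous_on D (\<lambda>A. xlogx (a0 M1 A))"
    by (rule continuous_on_compose2[OF xlogx_cont ca0]) (auto simp: D_def GL_dom_def)
  have c2: "continuous_on D (\<lambda>A. xlogx (A $ i))" for i
    by (rule continuous_on_compose2[OF xlogx_cont]) (auto simp: D_def GL_dom_def intro: continuous_intros)
  have cH: "continuous_on D H"
    unfolding Hdef by (intro continuous_intros c1 c2 ca0)
  obtain A where A: "A \<in> D" "\<forall>B\<in>D. H A \<le> H B"
    using continuous_attains_inf[OF cpt ne cH] by blast
  have strict: "2 * H ((1/2) *\<^sub>R (A + B)) < H A + H B"
    if AD: "A \<in> D" and BD: "B \<in> D" and ne: "A \<noteq> B" for A B
  proof -
    define C where "C = (1/2) *\<^sub>R (A + B)"
    have Ci: "C $ i = (A $ i + B $ i)/2" for i unfolding C_def by simp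
    have An: "0 \<le> A $ i" "0 \<le> B $ i" for i using AD BD by (auto simp: D_def GL_dom_def)
    have Aa: "0 \<le> a0 M1 A" "0 \<le> a0 M1 B" using AD BD by (auto simp: D_def GL_dom_def)
    obtain j where j: "A $ j \<noteq> B $ j" using ne by (auto simp: vec_eq_iff)
    have lin: "2 * (\<Sum>i\<in>UNIV. C $ i * c i) = (\<Sum>i\<in>UNIV. A $ i * c i) + (\<Sum>i\<in>UNIV. B $ i * c i)"
    proof -
      have "2 * (\<Sum>i\<in>UNIV. C $ i * c i) = (\<Sum>i\<in>UNIV. A $ i * c i + B $ i * c i)"
        unfolding sum_distrib_left Ci by (rule sum.cong) (auto simp: field_simps)
      then show ?thesis by (simp add: sum.distrib)
    qed
    have "(\<Sum>i\<in>UNIV. 2 * (xlogx (C $ i) - C $ i)) <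
          (\<Sum>i\<in>UNIV. (xlogx (A $ i) - A $ i) + (xlogx (B $ i) - B $ i))"
    proof (rule sum_strict_mono_ex1)
      show "\<forall>i\<in>UNIV. 2 * (xlogx (C $ i) - C $ i) \<le> (xlogx (A $ i) - A $ i) + (xlogx (B $ i) - B $ i)"
        using xlogx_mid[OF An] unfolding Ci by (auto simp: field_simps)
      show "\<exists>i\<in>UNIV. 2 * (xlogx (C $ i) - C $ i) < (xlogx (A $ i) - A $ i) + (xlogx (B $ i) - B $ i)"
        using xlogx_mid_strict[OF An j] unfolding Ci by (auto simp: field_simps)
    qed simp
    then have nl: "2 * (\<Sum>i\<in>UNIV. xlogx (C $ i) - C $ i) <
          (\<Sum>i\<in>UNIV. xlogx (A $ i) - A $ i) + (\<Sum>i\<in>UNIV. xlogx (B $ i) - B $ i)"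
      by (simp add: sum_distrib_left sum.distrib)
    have a: "2 * (xlogx (a0 M1 C) - a0 M1 C) \<le> (xlogx (a0 M1 A) - a0 M1 A) + (xlogx (a0 M1 B) - a0 M1 B)"
      using xlogx_mid[OF Aa] unfolding C_def a0_mid by (simp add: field_simps)
    show ?thesis using lin nl a unfolding Hdef C_def[symmetric] by (simp add: algebra_simps)
  qed
  show ?thesis unfolding D_def[symmetric] H_def[symmetric]
  proof (rule ex1I[of _ A])
    show "A \<in> D \<and> (\<forall>B\<in>D. H A \<le> H B)" using A by blast
  next
    fix B assume B: "B \<in> D \<and> (\<forall>A\<in>D. H B \<le> H A)"
    show "B = A"
    proof (rule ccontr)
      assume "B \<noteq> A"
      have "(1/2) *\<^sub>R (B + A) \<in> D"
        using B A(1) unfolding D_def GL_dom_def by (auto simp: add_nonneg_nonneg a0_mid)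
      then have "H B \<le> H ((1/2) *\<^sub>R (B + A))" "H A \<le> H B" "H B \<le> H A" using A B by auto
      then show False using strict[OF _ A(1) \<open>B \<noteq> A\<close>] B by linarith
    qed
  qed
qed

end
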